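(* Let $\mathcal{G}$ be an additive arithmetical semigroup satisfying Axiom $A^{\#}$ (constants $c_{\mathcal{G}}>0$, $q>1$) with $Z_{\mathcal{G}}(-q^{-1})\ne0$ and norm $\|g\|=q^{\partial(g)}$, and let $R(n,m)=\sum_{0\le\partial(g)\le n,\ d_-(g)>m}\mu(g)/\|g\|$. There is a constant $0\le\eta<1$ depending only on $\mathcal{G}$ such that for every $\varepsilon>0$, $$R(n,m)\ll_{\varepsilon} q^{(\eta-1+\varepsilon)n}$$ for all sufficiently large $n$ and all integers $0\le m\le\log\log n$.
   Context: An additive arithmetical semigroup is a commutative monoid $\mathcal{G}$ (written additively, identity $e_{\mathcal{G}}$) freely generated by a countable set $\mathcal{P}$ of primes, with an additive degree map $\partial\colon\mathcal{G}\to\mathbb{Z}_{\ge0}$, $\partial(e_{\mathcal{G}})=0$, $\partial(P)>0$ for primes, finitely many elements of each degree. Axiom $A^{\#}$: $\#\{g:\partial(g)=n\}=c_{\mathcal{G}}q^n+O(q^{\eta_0 n})$ for some $0\le\eta_0<1$. $Z_{\mathcal{G}}(z)=\prod_P(1-z^{\partial(P)})^{-1}$ (meromorphically continued). $P\mid g$ means $g=P+r$. $d_-(g)=\min\{\partial(P):P\mid g\}$ for $g\ne e_{\mathcal{G}}$, and $e_{\mathcal{G}}$ is included in the sum defining $R(n,m)$ (convention $d_-(e_{\mathcal{G}})=\infty$). $\mu$ is the Möbius function on $\mathcal{G}$. *)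

theory Defs
  imports "HOL-Analysis.Analysis" "HOL-Library.Multiset" "HOL-Library.Extended_Nat"
begin

text \<open>An additive arithmetical semigroup is modelled (up to isomorphism) as the free
commutative monoid of finite multisets over a type of primes \<open>'p\<close>, with a degree
function \<open>deg\<close> on primes extended additively.\<close>

definition degG :: "('p \<Rightarrow> nat) \<Rightarrow> 'p multiset \<Rightarrow> nat" where
  "degG deg g = sum_mset (image_mset deg g)"

definition arith_semigroup :: "('p \<Rightarrow> nat) \<Rightarrow> bool" where
  "arith_semigroup deg \<longleftrightarrow> (\<forall>p. deg p > 0) \<and> (\<forall>n. finite {g :: 'p multiset. degG deg g = n})"

definition G_count :: "('p \<Rightarrow> nat) \<Rightarrow> nat \<Rightarrow> nat" where
  "G_count deg n = card {g :: 'p multiset. degG deg g = n}"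

definition axiom_A_sharp :: "('p \<Rightarrow> nat) \<Rightarrow> real \<Rightarrow> real \<Rightarrow> bool" where
  "axiom_A_sharp deg c q \<longleftrightarrow>
     (\<exists>\<eta>0 C. 0 \<le> \<eta>0 \<and> \<eta>0 < 1 \<and>
        (\<forall>n. \<bar>real (G_count deg n) - c * q ^ n\<bar> \<le> C * q powr (\<eta>0 * real n)))"

text \<open>Z_G(z) = prod_P (1 - z^deg P)^(-1) = sum_n G(n) z^n for |z| < 1/q.\<close>
definition Z_series :: "('p \<Rightarrow> nat) \<Rightarrow> complex \<Rightarrow> complex" where
  "Z_series deg z = (\<Sum>n. of_nat (G_count deg n) * z ^ n)"

text \<open>The (meromorphic) continuation of Z_G, from the disc of convergence |z| < 1/q,
  takes a nonzero value at w: some holomorphic function on a connected open set containing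
  the disc and w agrees with Z_G on the disc and is nonzero at w (this value is independent
  of the choice of continuation by the identity theorem).\<close>
definition Z_cont_nonzero_at :: "('p \<Rightarrow> nat) \<Rightarrow> real \<Rightarrow> complex \<Rightarrow> bool" where
  "Z_cont_nonzero_at deg q w \<longleftrightarrow>
     (\<exists>S F. open S \<and> connected S \<and> ball 0 (1 / q) \<subseteq> S \<and> w \<in> S \<and> F holomorphic_on S \<and>
        (\<forall>z\<in>ball 0 (1 / q). F z = Z_series deg z) \<and> F w \<noteq> 0)"

definition mobiusG :: "'p multiset \<Rightarrow> int" where
  "mobiusG g = (if \<forall>p. count g p \<le> 1 then (-1) ^ size g else 0)"

definition d_minus :: "('p \<Rightarrow> nat) \<Rightarrow> 'p multiset \<Rightarrow> enat" where
  "d_minus deg g = (if g = {#} then \<infinity> else enat (Min (deg ` set_mset g)))"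

definition normG :: "('p \<Rightarrow> nat) \<Rightarrow> real \<Rightarrow> 'p multiset \<Rightarrow> real" where
  "normG deg q g = q ^ degG deg g"

definition R_sum :: "('p \<Rightarrow> nat) \<Rightarrow> real \<Rightarrow> nat \<Rightarrow> nat \<Rightarrow> real" where
  "R_sum deg q n m =
     (\<Sum>g\<in>{g :: 'p multiset. degG deg g \<le> n \<and> d_minus deg g > enat m}.
        real_of_int (mobiusG g) / normG deg q g)"

end

theory Submission
  imports Defs "HOL-Complex_Analysis.Complex_Analysis" "HOL-Real_Asymp.Real_Asymp"
begin

lemma degG_empty[simp]: "degG deg {#} = 0" by (simp add: degG_def)
lemma degG_add[simp]: "degG deg (a + b) = degG deg a + degG deg b" by (simp add: degG_def)
lemma degG_single[simp]: "degG deg {#p#} = deg p" by (simp add: degG_def)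
lemma degG_add_mset[simp]: "degG deg (add_mset p a) = deg p + degG deg a" by (simp add: degG_def)

lemma degG_mono: "h \<subseteq># g \<Longrightarrow> degG deg h \<le> degG deg g"
  by (metis degG_add le_add1 subset_mset.le_iff_add)

lemma degG_diff: "h \<subseteq># g \<Longrightarrow> degG deg (g - h) = degG deg g - degG deg h"
  by (metis add_diff_cancel_left' degG_add subset_mset.add_diff_inverse)

context
  fixes deg :: "'p \<Rightarrow> nat"
  assumes AS: "arith_semigroup deg"
begin

lemma deg_pos: "deg p > 0" using AS by (simp add: arith_semigroup_def)

lemma fin_eq: "finite {g :: 'p multiset. degG deg g = n}" using AS by (simp add: arith_semigroup_def)

lemma fin_le: "finite {g :: 'p multiset. degG deg g \<le> n}"
proof -
  have "{g :: 'p multiset. degG deg g \<le> n} = (\<Union>i\<in>{..n}. {g. degG deg g = i})" by auto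
  thus ?thesis using fin_eq by auto
qed

lemma size_le_degG: "size g \<le> degG deg g"
proof (induction g)
  case (add x g) thus ?case using deg_pos[of x] by simp
qed simp

lemma degG_zero_iff: "degG deg g = 0 \<longleftrightarrow> g = {#}"
  using size_le_degG[of g] by auto

lemma G_count_0: "G_count deg 0 = 1"
proof -
  have "{g :: 'p multiset. degG deg g = 0} = {{#}}" using degG_zero_iff by auto
  thus ?thesis by (simp add: G_count_def)
qed

lemma conv:
  fixes f u :: "'p multiset \<Rightarrow> real"
  shows "(\<Sum>g\<in>{g. degG deg g = n}. \<Sum>h\<in>{h. h \<subseteq># g}. f h * u (g - h)) =
         (\<Sum>i\<le>n. (\<Sum>h\<in>{h. degG deg h = i}. f h) * (\<Sum>k\<in>{k. degG deg k = n - i}. u k))"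
proof -
  have finsub: "finite {h. h \<subseteq># g}" for g :: "'p multiset"
    by (rule finite_subset[OF _ fin_le[of "degG deg g"]]) (auto simp: degG_mono)
  have "(\<Sum>g\<in>{g. degG deg g = n}. \<Sum>h\<in>{h. h \<subseteq># g}. f h * u (g - h)) =
        (\<Sum>(g,h)\<in>(SIGMA g:{g. degG deg g = n}. {h. h \<subseteq># g}). f h * u (g - h))"
    by (rule sum.Sigma) (auto simp: fin_eq finsub)
  also have "\<dots> = (\<Sum>(h,k)\<in>(SIGMA h:{h. degG deg h \<le> n}. {k. degG deg k = n - degG deg h}). f h * u k)"
    apply (rule sum.reindex_bij_witness[where i="\<lambda>(h,k). (h+k, h)" and j="\<lambda>(g,h). (h, g - h)"])
    apply (auto simp: degG_mono degG_diff)
    done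
  also have "\<dots> = (\<Sum>h\<in>{h. degG deg h \<le> n}. \<Sum>k\<in>{k. degG deg k = n - degG deg h}. f h * u k)"
    by (rule sum.Sigma[symmetric]) (auto simp: fin_le fin_eq)
  also have "\<dots> = (\<Sum>i\<le>n. \<Sum>h\<in>{h\<in>{h. degG deg h \<le> n}. degG deg h = i}. \<Sum>k\<in>{k. degG deg k = n - degG deg h}. f h * u k)"
    by (rule sum.group[symmetric]) (auto simp: fin_le)
  also have "\<dots> = (\<Sum>i\<le>n. (\<Sum>h\<in>{h. degG deg h = i}. f h) * (\<Sum>k\<in>{k. degG deg k = n - i}. u k))"
  proof (rule sum.cong[OF refl])
    fix i assume i: "i \<in> {..n}"
    have e: "{h\<in>{h. degG deg h \<le> n}. degG deg h = i} = {h. degG deg h = i}" using i by auto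
    show "(\<Sum>h\<in>{h\<in>{h. degG deg h \<le> n}. degG deg h = i}. \<Sum>k\<in>{k. degG deg k = n - degG deg h}. f h * u k) =
          (\<Sum>h\<in>{h. degG deg h = i}. f h) * (\<Sum>k\<in>{k. degG deg k = n - i}. u k)"
      unfolding e sum_distrib_right by (rule sum.cong[OF refl]) (simp add: sum_distrib_left)
  qed
  finally show ?thesis .
qed

end

lemma finite_submsets: "finite {h. h \<subseteq># (g :: 'a multiset)}"
proof (induction g)
  case empty thus ?case by simp
next
  case (add a g)
  have "{h. h \<subseteq># add_mset a g} \<subseteq> {h. h \<subseteq># g} \<union> add_mset a ` {h. h \<subseteq># g}"
  proof
    fix h assume h: "h \<in> {h. h \<subseteq># add_mset a g}"
    show "h \<in> {h. h \<subseteq># g} \<union> add_mset a ` {h. h \<subseteq># g}"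
    proof (cases "a \<in># h")
      case True
      then obtain h' where "h = add_mset a h'" by (metis multi_member_split)
      with h show ?thesis by auto
    next
      case False
      have "count h x \<le> count g x" for x
      proof -
        from h have "count h x \<le> count (add_mset a g) x" by (simp add: subseteq_mset_def)
        thus ?thesis using False by (cases "x = a") (auto simp: not_in_iff)
      qed
      hence "h \<subseteq># g" by (simp add: subseteq_mset_def)
      thus ?thesis by auto
    qed
  qed
  thus ?case using add finite_subset by blast
qed

lemma sum_pow_neg1: "finite E \<Longrightarrow> (\<Sum>H\<in>Pow E. (-1::real) ^ card H) = (if E = {} then 1 else 0)"
proof (induction E rule: finite_induct)
  case empty thus ?case by simp
next
  case (insert a E)
  have inj: "inj_on (insert a) (Pow E)" using insert(2) by (auto simp: inj_on_def)
  have disj: "Pow E \<inter> insert a ` Pow E = {}" using insert(2) by auto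
  have "(\<Sum>H\<in>Pow (insert a E). (-1::real) ^ card H) =
        (\<Sum>H\<in>Pow E. (-1::real) ^ card H) + (\<Sum>H\<in>insert a ` Pow E. (-1::real) ^ card H)"
    unfolding Pow_insert using insert(1) disj by (intro sum.union_disjoint) auto
  also have "(\<Sum>H\<in>insert a ` Pow E. (-1::real) ^ card H) = (\<Sum>H\<in>Pow E. (-1::real) ^ card (insert a H))"
    by (rule sum.reindex[OF inj, unfolded comp_def])
  also have "\<dots> = (\<Sum>H\<in>Pow E. - ((-1::real) ^ card H))"
    apply (rule sum.cong[OF refl])
    using insert(1,2) by (subst card_insert_disjoint) (auto intro: finite_subset)
  finally show ?case by (simp add: sum_negf)
qed

lemma mset_set_set_mset_sqf:
  assumes "\<forall>p. count h p \<le> 1" shows "h = mset_set (set_mset h)"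
proof (rule multiset_eqI)
  fix p
  show "count h p = count (mset_set (set_mset h)) p"
  proof (cases "p \<in># h")
    case True
    hence "count h p \<ge> 1" by (simp add: Suc_le_eq)
    with assms have "count h p = 1" using le_antisym by blast
    thus ?thesis using True by (simp add: count_mset_set')
  next
    case False thus ?thesis by (simp add: count_mset_set' not_in_iff)
  qed
qed

lemma mobius_sum:
  fixes g :: "'a multiset" and S :: "'a set"
  shows "(\<Sum>h\<in>{h. h \<subseteq># g \<and> set_mset (g - h) \<subseteq> S}. real_of_int (mobiusG h)) =
         (if set_mset g \<inter> S = {} then real_of_int (mobiusG g) else 0)"
proof -
  define X where "X = set_mset g"
  define D where "D = X - S"
  define E where "E = X \<inter> S"
  have finX: "finite X" by (simp add: X_def)
  define A where "A = {h. h \<subseteq># g \<and> set_mset (g - h) \<subseteq> S}"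
  define A' where "A' = {h \<in> A. \<forall>p. count h p \<le> 1}"
  define Sq where "Sq = {H. H \<subseteq> X \<and> set_mset (g - mset_set H) \<subseteq> S}"
  have finA: "finite A" unfolding A_def by (rule finite_subset[OF _ finite_submsets[of g]]) auto
  have "(\<Sum>h\<in>A. real_of_int (mobiusG h)) = (\<Sum>h\<in>A'. real_of_int (mobiusG h))"
    by (rule sum.mono_neutral_right) (auto simp: A'_def finA mobiusG_def)
  also have "A' = mset_set ` Sq"
  proof (intro equalityI subsetI)
    fix h assume h: "h \<in> A'"
    have hh: "h = mset_set (set_mset h)"
      using h by (intro mset_set_set_mset_sqf) (auto simp: A'_def)
    have "set_mset h \<subseteq> X" using h by (auto simp: A'_def A_def X_def dest: mset_subset_eqD)
    moreover have "set_mset (g - mset_set (set_mset h)) \<subseteq> S" using h hh by (auto simp: A'_def A_def)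
    ultimately show "h \<in> mset_set ` Sq" unfolding Sq_def using hh by blast
  next
    fix h assume "h \<in> mset_set ` Sq"
    then obtain H where H: "H \<subseteq> X" "set_mset (g - mset_set H) \<subseteq> S" "h = mset_set H" by (auto simp: Sq_def)
    have fH: "finite H" using H(1) finX finite_subset by blast
    have "mset_set H \<subseteq># g"
      using H(1) fH by (auto simp: subseteq_mset_def count_mset_set' X_def)
    thus "h \<in> A'" using H fH by (auto simp: A'_def A_def count_mset_set')
  qed
  also have "(\<Sum>h\<in>mset_set ` Sq. real_of_int (mobiusG h)) = (\<Sum>H\<in>Sq. real_of_int (mobiusG (mset_set H)))"
    apply (rule sum.reindex[unfolded comp_def])
    by (rule inj_onI) (auto simp: Sq_def dest!: finite_subset[OF _ finX])
  also have "\<dots> = (\<Sum>H\<in>Sq. (-1::real) ^ card H)"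
    by (rule sum.cong[OF refl]) (auto simp: mobiusG_def count_mset_set')
  finally have step1: "(\<Sum>h\<in>A. real_of_int (mobiusG h)) = (\<Sum>H\<in>Sq. (-1::real) ^ card H)" .
  have Sq_char: "H \<in> Sq \<longleftrightarrow> H \<subseteq> X \<and> (\<forall>p\<in>D. p \<in> H \<and> count g p = 1)" for H
  proof -
    have "set_mset (g - mset_set H) \<subseteq> S \<longleftrightarrow> (\<forall>p\<in>D. p \<in> H \<and> count g p = 1)" if HX: "H \<subseteq> X"
    proof -
      have fH: "finite H" using HX finX finite_subset by blast
      have mem: "p \<in># g - mset_set H \<longleftrightarrow> (if p \<in> H then 1 else 0) < count g p" for p
        using fH by (simp add: in_diff_count count_mset_set')
      show ?thesis
      proof
        assume L: "set_mset (g - mset_set H) \<subseteq> S"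
        show "\<forall>p\<in>D. p \<in> H \<and> count g p = 1"
        proof
          fix p assume p: "p \<in> D"
          hence "p \<notin># g - mset_set H" "count g p > 0" using L by (auto simp: D_def X_def)
          hence c: "count g p \<le> (if p \<in> H then 1 else 0)" "count g p \<noteq> 0" unfolding mem by auto
          show "p \<in> H \<and> count g p = 1"
          proof (cases "p \<in> H")
            case True thus ?thesis using c by (simp del: count_eq_zero_iff count_greater_zero_iff)
          next
            case False thus ?thesis using c by (simp del: count_eq_zero_iff count_greater_zero_iff)
          qed
        qed
      next
        assume R: "\<forall>p\<in>D. p \<in> H \<and> count g p = 1"
        show "set_mset (g - mset_set H) \<subseteq> S"
        proof
          fix p assume p: "p \<in># g - mset_set H"
          hence c: "(if p \<in> H then 1 else 0) < count g p" using mem by blast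
          hence "count g p > 0" by (auto simp del: count_greater_zero_iff split: if_splits)
          hence "p \<in> X" by (simp add: X_def)
          show "p \<in> S"
          proof (rule ccontr)
            assume "p \<notin> S"
            with \<open>p \<in> X\<close> have "p \<in> D" by (auto simp: D_def)
            with R c show False by auto
          qed
        qed
      qed
    qed
    thus ?thesis by (auto simp: Sq_def)
  qed
  show ?thesis
  proof (cases "\<forall>p\<in>D. count g p = 1")
    case False
    then have "Sq = {}" using Sq_char by auto
    moreover have "set_mset g \<inter> S = {} \<Longrightarrow> mobiusG g = 0"
    proof -
      obtain p where p: "p \<in> D" "count g p \<noteq> 1" using False by auto
      hence "count g p > 0" by (auto simp: D_def X_def)
      hence "\<not> count g p \<le> 1" using p(2) by linarith
      thus "mobiusG g = 0" by (auto simp: mobiusG_def)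
    qed
    ultimately show ?thesis using step1 by (auto simp: A_def)
  next
    case True
    have DE: "D \<inter> E = {}" "X = D \<union> E" by (auto simp: D_def E_def)
    have finD: "finite D" "finite E" using finX DE by auto
    have "Sq = (\<lambda>H'. D \<union> H') ` Pow E"
      using Sq_char True DE by auto
    moreover have "inj_on (\<lambda>H'. D \<union> H') (Pow E)"
      using DE by (auto simp: inj_on_def)
    ultimately have "(\<Sum>H\<in>Sq. (-1::real) ^ card H) = (\<Sum>H'\<in>Pow E. (-1::real) ^ card (D \<union> H'))"
      by (simp add: sum.reindex)
    also have "\<dots> = (\<Sum>H'\<in>Pow E. (-1::real) ^ card D * (-1) ^ card H')"
      apply (rule sum.cong[OF refl])
      using DE finD by (subst card_Un_disjoint) (auto intro: finite_subset simp: power_add)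
    also have "\<dots> = (-1) ^ card D * (if E = {} then 1 else 0)"
      by (simp add: sum_distrib_left[symmetric] sum_pow_neg1 finD)
    finally have s: "(\<Sum>H\<in>Sq. (-1::real) ^ card H) = (-1) ^ card D * (if E = {} then 1 else 0)" .
    show ?thesis
    proof (cases "E = {}")
      case False thus ?thesis using s step1 by (auto simp: A_def E_def X_def)
    next
      case Et: True
      have XD: "X = D" using DE Et by auto
      have cnt: "\<forall>p. count g p \<le> 1"
      proof
        fix p show "count g p \<le> 1"
          using True XD by (cases "p \<in># g") (auto simp: X_def not_in_iff)
      qed
      have "g = mset_set X"
        using cnt mset_set_set_mset_sqf X_def by blast
      hence "size g = card D" using XD by (metis size_mset_set)
      hence "real_of_int (mobiusG g) = (-1) ^ card D" using cnt by (simp add: mobiusG_def)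
      thus ?thesis using s step1 Et by (auto simp: A_def E_def X_def)
    qed
  qed
qed

definition lam :: "('p \<Rightarrow> nat) \<Rightarrow> 'p multiset \<Rightarrow> real" where
  "lam deg h = (if \<exists>P. set_mset h = {P} then real (degG deg h) / real (size h) else 0)"

lemma degG_replicate[simp]: "degG deg (replicate_mset n a) = n * deg a"
  by (simp add: degG_def)

lemma single_set_replicate: "set_mset h = {P} \<Longrightarrow> h = replicate_mset (count h P) P"
  by (rule multiset_eqI) (auto simp: not_in_iff[symmetric] count_eq_zero_iff)

lemma lam_nonneg: "lam deg h \<ge> 0" by (simp add: lam_def)

lemma lam_le: "lam deg h \<le> real (degG deg h)"
proof (cases "\<exists>P. set_mset h = {P}")
  case True
  then have "h \<noteq> {#}" by auto
  hence "size h \<ge> 1" by (simp add: Suc_le_eq nonempty_has_size)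
  hence "real (degG deg h) / real (size h) \<le> real (degG deg h)"
    using mult_right_mono[of 1 "real (size h)" "real (degG deg h)"] by (simp add: field_simps)
  thus ?thesis using True by (simp add: lam_def)
qed (simp add: lam_def)

lemma lam_sum: "(\<Sum>h\<in>{h. h \<subseteq># g}. lam deg h) = real (degG deg g)"
proof (induction g)
  case empty
  have "{h. h \<subseteq># ({#} :: 'a multiset)} = {{#}}" by auto
  thus ?case by (simp add: lam_def)
next
  case (add a g)
  define h0 where "h0 = replicate_mset (count g a + 1) a"
  define B where "B = {h. h \<subseteq># add_mset a g \<and> \<not> h \<subseteq># g}"
  have split: "{h. h \<subseteq># add_mset a g} = {h. h \<subseteq># g} \<union> B" by (auto simp: B_def subseteq_mset_def intro: le_SucI)
  have finB: "finite B" unfolding B_def by (rule finite_subset[OF _ finite_submsets[of "add_mset a g"]]) auto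
  have h0B: "h0 \<in> B" by (auto simp: B_def h0_def subseteq_mset_def)
  have other: "lam deg h = 0" if h: "h \<in> B" "h \<noteq> h0" for h
  proof (rule ccontr)
    assume "lam deg h \<noteq> 0"
    then obtain P where P: "set_mset h = {P}" by (auto simp: lam_def split: if_splits)
    have hr: "h = replicate_mset (count h P) P" by (rule single_set_replicate[OF P])
    from h(1) have sub: "count h x \<le> count (add_mset a g) x" for x by (auto simp: B_def subseteq_mset_def)
    from h(1) obtain x where x: "count h x > count g x" by (auto simp: B_def subseteq_mset_def not_le)
    have "x = P" using x P by (metis count_eq_zero_iff insertCI not_less0 singletonD)
    have "P = a" using sub[of P] x \<open>x = P\<close> by (cases "P = a") auto
    hence "count h a = count g a + 1" using sub[of a] x \<open>x = P\<close> by auto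
    hence "h = h0" using hr \<open>P = a\<close> by (simp add: h0_def)
    with h(2) show False by simp
  qed
  have "(\<Sum>h\<in>B. lam deg h) = lam deg h0"
    by (rule sum.remove[OF finB h0B, THEN trans]) (simp add: other sum.neutral)
  also have "lam deg h0 = deg a"
  proof -
    have "set_mset h0 = {a}" by (simp add: h0_def)
    moreover have "real (degG deg h0) / real (size h0) = deg a"
      by (simp add: h0_def del: replicate_mset_Suc) (simp add: field_simps)
    ultimately show ?thesis by (auto simp: lam_def)
  qed
  finally have sB: "(\<Sum>h\<in>B. lam deg h) = deg a" .
  have "(\<Sum>h\<in>{h. h \<subseteq># add_mset a g}. lam deg h) = (\<Sum>h\<in>{h. h \<subseteq># g}. lam deg h) + (\<Sum>h\<in>B. lam deg h)"
    unfolding split by (rule sum.union_disjoint) (auto simp: finite_submsets finB B_def)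
  thus ?case using add sB by simp
qed

locale asg =
  fixes deg :: "'p \<Rightarrow> nat"
  assumes AS: "arith_semigroup deg"
begin

definition Gc :: "nat \<Rightarrow> real" where "Gc n = real (G_count deg n)"
definition Mu :: "nat \<Rightarrow> real" where "Mu n = (\<Sum>g\<in>{g. degG deg g = n}. real_of_int (mobiusG g))"
definition Lam :: "nat \<Rightarrow> real" where "Lam n = (\<Sum>g\<in>{g. degG deg g = n}. lam deg g)"
definition bS :: "'p set \<Rightarrow> nat \<Rightarrow> real" where "bS S j = real (card {g. degG deg g = j \<and> set_mset g \<subseteq> S})"

lemmas fin_eq' = fin_eq[OF AS] and fin_le' = fin_le[OF AS] and conv' = conv[OF AS]

lemma mob_empty: "mobiusG {#} = 1" by (simp add: mobiusG_def)

lemma I1: "(\<Sum>i\<le>n. Mu i * Gc (n - i)) = (if n = 0 then 1 else 0)"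
proof -
  have "(\<Sum>i\<le>n. Mu i * Gc (n - i)) =
        (\<Sum>i\<le>n. (\<Sum>h\<in>{h. degG deg h = i}. real_of_int (mobiusG h)) * (\<Sum>k\<in>{k. degG deg k = n - i}. 1))"
    by (simp add: Mu_def Gc_def G_count_def)
  also have "\<dots> = (\<Sum>g\<in>{g. degG deg g = n}. \<Sum>h\<in>{h. h \<subseteq># g}. real_of_int (mobiusG h) * 1)"
    by (rule conv'[symmetric])
  also have "\<dots> = (\<Sum>g\<in>{g. degG deg g = n}. if g = {#} then 1 else 0)"
  proof (rule sum.cong[OF refl])
    fix g :: "'p multiset"
    have "(\<Sum>h\<in>{h. h \<subseteq># g}. real_of_int (mobiusG h) * 1) =
          (\<Sum>h\<in>{h. h \<subseteq># g \<and> set_mset (g - h) \<subseteq> UNIV}. real_of_int (mobiusG h))" by simp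
    also have "\<dots> = (if g = {#} then 1 else 0)" by (subst mobius_sum) (simp add: mob_empty)
    finally show "(\<Sum>h\<in>{h. h \<subseteq># g}. real_of_int (mobiusG h) * 1) = (if g = {#} then 1 else 0)" .
  qed
  also have "\<dots> = (if n = 0 then 1 else 0)"
  proof (cases "n = 0")
    case True
    hence "{g. degG deg g = n} = {{#}}" using degG_zero_iff[OF AS] by auto
    thus ?thesis using True by simp
  next
    case False
    hence "\<forall>g\<in>{g. degG deg g = n}. g \<noteq> {#}" by auto
    thus ?thesis using False by (simp add: sum.neutral)
  qed
  finally show ?thesis .
qed

lemma I2: "real n * Gc n = (\<Sum>i\<le>n. Lam i * Gc (n - i))"
proof -
  have "(\<Sum>i\<le>n. Lam i * Gc (n - i)) =
        (\<Sum>i\<le>n. (\<Sum>h\<in>{h. degG deg h = i}. lam deg h) * (\<Sum>k\<in>{k. degG deg k = n - i}. 1))"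
    by (simp add: Lam_def Gc_def G_count_def)
  also have "\<dots> = (\<Sum>g\<in>{g. degG deg g = n}. \<Sum>h\<in>{h. h \<subseteq># g}. lam deg h * 1)"
    by (rule conv'[symmetric])
  also have "\<dots> = (\<Sum>g\<in>{g. degG deg g = n}. real n)"
    by (rule sum.cong[OF refl]) (simp add: lam_sum)
  also have "\<dots> = real n * Gc n" by (simp add: Gc_def G_count_def)
  finally show ?thesis by simp
qed

lemma I3: "(\<Sum>g\<in>{g. degG deg g = n \<and> set_mset g \<inter> S = {}}. real_of_int (mobiusG g)) = (\<Sum>i\<le>n. Mu i * bS S (n - i))"
proof -
  define u where "u = (\<lambda>k :: 'p multiset. if set_mset k \<subseteq> S then (1::real) else 0)"
  have "(\<Sum>i\<le>n. Mu i * bS S (n - i)) =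
        (\<Sum>i\<le>n. (\<Sum>h\<in>{h. degG deg h = i}. real_of_int (mobiusG h)) * (\<Sum>k\<in>{k. degG deg k = n - i}. u k))"
  proof (rule sum.cong[OF refl])
    fix i
    have "(\<Sum>k\<in>{k. degG deg k = n - i}. u k) = (\<Sum>k\<in>{k\<in>{k. degG deg k = n - i}. set_mset k \<subseteq> S}. 1)"
      unfolding u_def by (rule sum.inter_filter[symmetric]) (rule fin_eq')
    also have "\<dots> = bS S (n - i)" by (simp add: bS_def conj_commute)
    finally show "Mu i * bS S (n - i) = (\<Sum>h\<in>{h. degG deg h = i}. real_of_int (mobiusG h)) * (\<Sum>k\<in>{k. degG deg k = n - i}. u k)"
      by (simp add: Mu_def)
  qed
  also have "\<dots> = (\<Sum>g\<in>{g. degG deg g = n}. \<Sum>h\<in>{h. h \<subseteq># g}. real_of_int (mobiusG h) * u (g - h))"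
    by (rule conv'[symmetric])
  also have "\<dots> = (\<Sum>g\<in>{g. degG deg g = n}. if set_mset g \<inter> S = {} then real_of_int (mobiusG g) else 0)"
  proof (rule sum.cong[OF refl])
    fix g :: "'p multiset"
    have "(\<Sum>h\<in>{h. h \<subseteq># g}. real_of_int (mobiusG h) * u (g - h)) =
          (\<Sum>h\<in>{h\<in>{h. h \<subseteq># g}. set_mset (g - h) \<subseteq> S}. real_of_int (mobiusG h))"
    proof -
      have "(\<Sum>h\<in>{h. h \<subseteq># g}. real_of_int (mobiusG h) * u (g - h)) =
            (\<Sum>h\<in>{h. h \<subseteq># g}. if set_mset (g - h) \<subseteq> S then real_of_int (mobiusG h) else 0)"
        by (rule sum.cong) (auto simp: u_def)
      also have "\<dots> = (\<Sum>h\<in>{h\<in>{h. h \<subseteq># g}. set_mset (g - h) \<subseteq> S}. real_of_int (mobiusG h))"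
        by (rule sum.inter_filter[OF finite_submsets, symmetric])
      finally show ?thesis .
    qed
    also have "\<dots> = (if set_mset g \<inter> S = {} then real_of_int (mobiusG g) else 0)"
      using mobius_sum[of g S] by simp
    finally show "(\<Sum>h\<in>{h. h \<subseteq># g}. real_of_int (mobiusG h) * u (g - h)) = (if set_mset g \<inter> S = {} then real_of_int (mobiusG g) else 0)" .
  qed
  also have "\<dots> = (\<Sum>g\<in>{g\<in>{g. degG deg g = n}. set_mset g \<inter> S = {}}. real_of_int (mobiusG g))"
    by (rule sum.inter_filter[symmetric]) (rule fin_eq')
  finally show ?thesis by simp
qed

end

lemma radius_bound:
  fixes a :: "nat \<Rightarrow> complex"
  assumes "\<And>n. norm (a n) \<le> K * b ^ n" "b > 0"
  shows "fps_conv_radius (Abs_fps a) \<ge> ereal (1 / b)"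
  unfolding fps_conv_radius_def
proof (rule conv_radius_geI_ex')
  fix r :: real assume r: "0 < r" "ereal r < ereal (1 / b)"
  hence br: "b * r < 1" "b * r \<ge> 0" using assms(2) by (auto simp: field_simps)
  have "summable (\<lambda>n. K * (b * r) ^ n)" using br by (intro summable_mult summable_geometric) auto
  thus "summable (\<lambda>n. fps_nth (Abs_fps a) n * of_real r ^ n)"
  proof (rule summable_comparison_test'[where N = 0])
    fix n :: nat
    have "norm (a n * of_real r ^ n) = norm (a n) * r ^ n" using r by (simp add: norm_mult norm_power)
    also have "\<dots> \<le> K * b ^ n * r ^ n" using assms(1)[of n] r by (intro mult_right_mono) auto
    finally show "norm (fps_nth (Abs_fps a) n * of_real r ^ n) \<le> K * (b * r) ^ n" by (simp add: power_mult_distrib mult_ac)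
  qed
qed

locale asgq = asg deg for deg :: "'p \<Rightarrow> nat" +
  fixes c q e0 C0 :: real
  assumes cpos: "c > 0" and q1: "q > 1" and e0: "0 \<le> e0" "e0 < 1"
    and AA: "\<And>n. \<bar>real (G_count deg n) - c * q ^ n\<bar> \<le> C0 * q powr (e0 * real n)"
begin

definition K :: real where "K = c + \<bar>C0\<bar>"

lemma qpos: "q > 0" using q1 by simp

lemma Gc_nonneg: "Gc n \<ge> 0" by (simp add: Gc_def)

lemma C0_nonneg: "C0 \<ge> 0" using AA[of 0] qpos by simp

lemma Gc_bound: "Gc n \<le> K * q ^ n"
proof -
  have "q powr (e0 * real n) \<le> q powr (real n)" using q1 e0 by (intro powr_mono) (auto intro: mult_left_le_one_le)
  also have "\<dots> = q ^ n" using qpos by (simp add: powr_realpow)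
  finally have p: "q powr (e0 * real n) \<le> q ^ n" .
  have "Gc n \<le> c * q ^ n + C0 * q powr (e0 * real n)" using AA[of n] by (simp add: Gc_def)
  also have "\<dots> \<le> c * q ^ n + \<bar>C0\<bar> * q ^ n" using p C0_nonneg by (intro add_left_mono mult_mono) auto
  finally show ?thesis by (simp add: K_def algebra_simps)
qed

lemma E_bound: "\<bar>Gc n - c * q ^ n\<bar> \<le> C0 * (q powr e0) ^ n"
  using AA[of n] qpos by (simp add: Gc_def powr_powr[symmetric] powr_realpow[symmetric] mult.commute)

lemma Mu_bound: "\<bar>Mu n\<bar> \<le> Gc n"
proof -
  have "\<bar>Mu n\<bar> \<le> (\<Sum>g\<in>{g. degG deg g = n}. \<bar>real_of_int (mobiusG g)\<bar>)" unfolding Mu_def by (rule sum_abs)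
  also have "\<dots> \<le> (\<Sum>g\<in>{g. degG deg g = n}. 1)" by (rule sum_mono) (auto simp: mobiusG_def)
  finally show ?thesis by (simp add: Gc_def G_count_def)
qed

lemma Lam_nonneg: "Lam n \<ge> 0" unfolding Lam_def by (intro sum_nonneg lam_nonneg)

lemma Lam_le: "Lam n \<le> real n * Gc n"
proof -
  have "Lam n \<le> (\<Sum>g\<in>{g. degG deg g = n}. real n)" unfolding Lam_def
    by (rule sum_mono) (use lam_le in auto)
  thus ?thesis by (simp add: Gc_def G_count_def mult.commute)
qed

lemma Lam0: "Lam 0 = 0" using Lam_le[of 0] Lam_nonneg[of 0] by simp

lemma Lamn_bound: "\<bar>Lam n / real n\<bar> \<le> Gc n"
proof (cases "n = 0")
  case False
  thus ?thesis using Lam_le[of n] Lam_nonneg[of n] by (simp add: field_simps)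
qed (simp add: Gc_nonneg)

definition Zf :: "complex fps" where "Zf = Abs_fps (\<lambda>n. of_real (Gc n))"
definition Mf :: "complex fps" where "Mf = Abs_fps (\<lambda>n. of_real (Mu n))"
definition Lf :: "complex fps" where "Lf = Abs_fps (\<lambda>n. of_real (Lam n / real n))"
definition Ef :: "complex fps" where "Ef = Abs_fps (\<lambda>n. of_real (Gc n - c * q ^ n))"

lemma Zf_rad: "fps_conv_radius Zf \<ge> ereal (1 / q)"
  unfolding Zf_def by (rule radius_bound[where K = K]) (use Gc_bound Gc_nonneg qpos in auto)
lemma Mf_rad: "fps_conv_radius Mf \<ge> ereal (1 / q)"
  unfolding Mf_def by (rule radius_bound[where K = K]) (use Gc_bound Mu_bound qpos in \<open>auto intro: order_trans\<close>)
lemma Lf_rad: "fps_conv_radius Lf \<ge> ereal (1 / q)"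
  unfolding Lf_def by (rule radius_bound[where K = K]) (use Gc_bound Lamn_bound qpos in \<open>auto intro: order_trans simp del: of_real_divide\<close>)

definition R0 :: real where "R0 = 1 / q powr e0"

lemma R0: "1 / q < R0" "R0 \<le> 1" "R0 > 0"
proof -
  have "q powr e0 < q powr 1" using q1 e0 by (intro powr_less_mono) auto
  thus "1 / q < R0" using qpos by (simp add: R0_def field_simps)
  have "q powr e0 \<ge> 1" using q1 e0 by (simp add: ge_one_powr_ge_zero)
  thus "R0 \<le> 1" by (auto simp: R0_def divide_le_eq)
  show "R0 > 0" using qpos by (simp add: R0_def)
qed

lemma Ef_rad: "fps_conv_radius Ef \<ge> ereal R0"
  unfolding Ef_def R0_def
proof (rule radius_bound[where K = C0])
  fix n
  have "norm (complex_of_real (Gc n - c * q ^ n)) = \<bar>Gc n - c * q ^ n\<bar>" by (rule norm_of_real)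
  thus "norm (complex_of_real (Gc n - c * q ^ n)) \<le> C0 * (q powr e0) ^ n" using E_bound by simp
qed (use qpos in auto)

lemma ZM: "Zf * Mf = 1"
proof (rule fps_ext)
  fix n
  have "(Mf * Zf) $ n = of_real (\<Sum>i\<le>n. Mu i * Gc (n - i))"
    by (simp add: fps_mult_nth Mf_def Zf_def atLeast0AtMost)
  also have "\<dots> = (1 :: complex fps) $ n" by (simp add: I1)
  finally show "(Zf * Mf) $ n = (1 :: complex fps) $ n" by (simp add: mult.commute)
qed

lemma ZL: "fps_deriv Zf = fps_deriv Lf * Zf"
proof (rule fps_ext)
  fix n
  have "(fps_deriv Lf * Zf) $ n = (\<Sum>i=0..n. of_nat (Suc i) * of_real (Lam (Suc i) / real (Suc i)) * of_real (Gc (n - i)))"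
    by (simp add: fps_mult_nth Lf_def Zf_def fps_deriv_def)
  also have "\<dots> = (\<Sum>i\<le>n. of_real (Lam (Suc i) * Gc (n - i)))"
    unfolding atLeast0AtMost
  proof (rule sum.cong[OF refl])
    fix i
    have "of_nat (Suc i) * complex_of_real (Lam (Suc i) / real (Suc i)) = of_real (real (Suc i) * (Lam (Suc i) / real (Suc i)))"
      by (simp only: of_real_mult of_real_of_nat_eq)
    also have "real (Suc i) * (Lam (Suc i) / real (Suc i)) = Lam (Suc i)" by (simp del: of_nat_Suc)
    finally show "of_nat (Suc i) * complex_of_real (Lam (Suc i) / real (Suc i)) * complex_of_real (Gc (n - i)) = of_real (Lam (Suc i) * Gc (n - i))"
      by simp
  qed
  also have "\<dots> = of_real (\<Sum>i\<le>n. Lam (Suc i) * Gc (n - i))" by simp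
  also have "(\<Sum>i\<le>n. Lam (Suc i) * Gc (n - i)) = (\<Sum>i\<le>Suc n. Lam i * Gc (Suc n - i))"
    by (subst sum.atMost_Suc_shift) (simp add: Lam0)
  also have "\<dots> = real (Suc n) * Gc (Suc n)" by (rule I2[symmetric])
  finally show "fps_deriv Zf $ n = (fps_deriv Lf * Zf) $ n"
    by (simp add: fps_deriv_def Zf_def)
qed

end

context asgq begin

lemma rad_lt: "norm z < 1 / q \<Longrightarrow> ereal r \<le> fps_conv_radius F \<Longrightarrow> 1 / q \<le> r \<Longrightarrow> ereal (norm z) < fps_conv_radius F"
  by (meson ereal_less_eq(3) le_less_trans linorder_not_le order_less_le_trans)

lemma inZ: "norm z < 1 / q \<Longrightarrow> ereal (norm z) < fps_conv_radius Zf" using rad_lt[OF _ Zf_rad] by simp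
lemma inM: "norm z < 1 / q \<Longrightarrow> ereal (norm z) < fps_conv_radius Mf" using rad_lt[OF _ Mf_rad] by simp
lemma inL: "norm z < 1 / q \<Longrightarrow> ereal (norm z) < fps_conv_radius Lf" using rad_lt[OF _ Lf_rad] by simp
lemma inE: assumes "norm z < R0" shows "ereal (norm z) < fps_conv_radius Ef"
proof -
  have "ereal (norm z) < ereal R0" using assms by simp
  thus ?thesis using Ef_rad by (rule order_less_le_trans)
qed

lemma ZM_eval: "norm z < 1 / q \<Longrightarrow> eval_fps Zf z * eval_fps Mf z = 1"
  using eval_fps_mult[OF inZ inM, of z] ZM by simp

lemma Z_ne0: "norm z < 1 / q \<Longrightarrow> eval_fps Zf z \<noteq> 0"
  using ZM_eval by force

lemma Z_exp: assumes "norm z < 1 / q" shows "eval_fps Zf z = exp (eval_fps Lf z)"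
proof -
  define B where "B = ball (0::complex) (1 / q)"
  define h where "h = (\<lambda>x. eval_fps Zf x * exp (- eval_fps Lf x))"
  have "(h has_field_derivative 0) (at x within B)" if x: "x \<in> B" for x
  proof -
    have nx: "norm x < 1 / q" using x by (simp add: B_def)
    have dZ: "(eval_fps Zf has_field_derivative eval_fps (fps_deriv Zf) x) (at x within B)"
      by (rule has_field_derivative_eval_fps[OF inZ[OF nx]])
    have dL: "(eval_fps Lf has_field_derivative eval_fps (fps_deriv Lf) x) (at x within B)"
      by (rule has_field_derivative_eval_fps[OF inL[OF nx]])
    have rd: "ereal (norm x) < fps_conv_radius (fps_deriv Lf)"
      using inL[OF nx] fps_conv_radius_deriv[of Lf] by (meson order_less_le_trans)
    have eq: "eval_fps (fps_deriv Zf) x = eval_fps (fps_deriv Lf) x * eval_fps Zf x"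
      unfolding ZL by (rule eval_fps_mult[OF rd inZ[OF nx]])
    have e: "((\<lambda>x. exp (- eval_fps Lf x)) has_field_derivative exp (- eval_fps Lf x) * (- eval_fps (fps_deriv Lf) x)) (at x within B)"
      by (rule DERIV_chain2[OF DERIV_exp DERIV_minus[OF dL]])
    have "(h has_field_derivative (eval_fps (fps_deriv Zf) x * exp (- eval_fps Lf x) +
            (exp (- eval_fps Lf x) * (- eval_fps (fps_deriv Lf) x)) * eval_fps Zf x)) (at x within B)"
      unfolding h_def by (rule DERIV_mult[OF dZ e])
    also have "eval_fps (fps_deriv Zf) x * exp (- eval_fps Lf x) +
            (exp (- eval_fps Lf x) * (- eval_fps (fps_deriv Lf) x)) * eval_fps Zf x = 0"
      unfolding eq by (simp add: algebra_simps)
    finally show ?thesis .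
  qed
  then obtain k where k: "\<forall>x\<in>B. h x = k"
    using has_field_derivative_zero_constant[of B h] by (auto simp: B_def)
  have "0 \<in> B" using qpos by (simp add: B_def)
  hence "k = h 0" using k by simp
  also have "h 0 = 1" by (simp add: h_def eval_fps_at_0 Zf_def Lf_def Gc_def G_count_0[OF AS] Lam0)
  finally have "h z = 1" using k assms by (simp add: B_def)
  thus ?thesis by (simp add: h_def exp_minus field_simps)
qed

lemma Z_E: fixes z :: complex assumes "norm z < 1 / q" shows "eval_fps Zf z = of_real c / (1 - of_real q * z) + eval_fps Ef z"
proof -
  have s1: "(\<lambda>n. of_real (Gc n) * z ^ n) sums eval_fps Zf z"
    using sums_eval_fps[OF inZ[OF assms]] by (simp add: Zf_def)
  have s2: "(\<lambda>n. of_real (Gc n - c * q ^ n) * z ^ n) sums eval_fps Ef z"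
    using sums_eval_fps[OF inE, of z] assms R0(1) by (simp add: Ef_def)
  have nq: "norm (of_real q * z) < 1" using assms qpos by (simp add: norm_mult field_simps)
  have s3: "(\<lambda>n. of_real c * (of_real q * z) ^ n) sums (of_real c * (1 / (1 - of_real q * z)))"
    by (rule sums_mult[OF geometric_sums[OF nq]])
  have "(\<lambda>n. of_real c * (of_real q * z) ^ n + of_real (Gc n - c * q ^ n) * z ^ n) sums
        (of_real c * (1 / (1 - of_real q * z)) + eval_fps Ef z)"
    by (rule sums_add[OF s3 s2])
  moreover have "(\<lambda>n. of_real c * (of_real q * z) ^ n + of_real (Gc n - c * q ^ n) * z ^ n) = (\<lambda>n. of_real (Gc n) * z ^ n)"
    by (auto simp: algebra_simps power_mult_distrib)
  ultimately have "(\<lambda>n. of_real (Gc n) * z ^ n) sums (of_real c * (1 / (1 - of_real q * z)) + eval_fps Ef z)" by simp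
  thus ?thesis using s1 sums_unique2 by fastforce
qed

definition W :: "complex \<Rightarrow> complex" where "W z = of_real c + (1 - of_real q * z) * eval_fps Ef z"

lemma W_holo: "W holomorphic_on ball 0 R0"
proof -
  have "eval_fps Ef holomorphic_on ball 0 R0" by (rule holomorphic_on_eval_fps[OF ball_eball_mono[OF Ef_rad]])
  thus ?thesis unfolding W_def by (intro holomorphic_intros ball_eball_mono[OF Ef_rad])
qed

lemma W_isCont: "norm z < R0 \<Longrightarrow> isCont W z"
  using W_holo by (meson centre_in_ball continuous_on_eq_continuous_at holomorphic_on_imp_continuous_on mem_ball_0 open_ball)

lemma W_deriv: "norm z < R0 \<Longrightarrow> \<exists>D. (W has_field_derivative D) (at z)"
  using W_holo by (meson field_differentiable_def holomorphic_on_imp_differentiable_at mem_ball_0 open_ball)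

lemma one_minus_ne: "norm (z::complex) < 1 / q \<Longrightarrow> 1 - of_real q * z \<noteq> 0"
proof
  assume "norm z < 1 / q" "1 - of_real q * z = 0"
  hence "norm (of_real q * z) = 1" by (metis eq_iff_diff_eq_0 norm_one)
  thus False using \<open>norm z < 1 / q\<close> qpos by (simp add: norm_mult field_simps)
qed

lemma Z_W: fixes z :: complex assumes "norm z < 1 / q" shows "eval_fps Zf z = W z / (1 - of_real q * z)"
  using Z_E[OF assms] one_minus_ne[OF assms] by (simp add: W_def field_simps)

lemma W_ne_inner: "norm (z::complex) < 1 / q \<Longrightarrow> W z \<noteq> 0"
  using Z_W Z_ne0 by force

lemma W_at_1q: "W (of_real (1 / q)) = of_real c"
  using qpos by (simp add: W_def)

end

lemma three_four_one_term:
  fixes w :: complex assumes "norm w = 1"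
  shows "0 \<le> 3 + 4 * Re w + Re (w ^ 2)"
proof -
  have h: "(Re w)^2 + (Im w)^2 = 1" using assms cmod_power2[of w] by simp
  have "(1 + Re w)^2 = 1 + 2 * Re w + (Re w)^2" by (simp add: power2_eq_square algebra_simps)
  moreover have "0 \<le> (1 + Re w)^2" by simp
  ultimately show ?thesis unfolding Re_power2 using h by linarith
qed

context asgq begin

lemma L_re_sums:
  fixes x :: complex assumes "norm x < 1 / q"
  shows "(\<lambda>n. Lam n / real n * Re (x ^ n)) sums Re (eval_fps Lf x)"
proof -
  have "(\<lambda>n. fps_nth Lf n * x ^ n) sums eval_fps Lf x" by (rule sums_eval_fps[OF inL[OF assms]])
  hence "(\<lambda>n. Re (fps_nth Lf n * x ^ n)) sums Re (eval_fps Lf x)" by (simp add: sums_complex_iff)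
  moreover have "\<And>n. Re (fps_nth Lf n * x ^ n) = Lam n / real n * Re (x ^ n)"
    by (simp add: Lf_def del: of_real_divide)
  ultimately show ?thesis by simp
qed

lemma ineq341:
  fixes \<omega> :: complex and r :: real
  assumes r: "0 < r" "r < 1 / q" and w: "norm \<omega> = 1"
  shows "1 \<le> norm (eval_fps Zf (of_real r)) ^ 3 * norm (eval_fps Zf (of_real r * \<omega>)) ^ 4 *
              norm (eval_fps Zf (of_real r * \<omega> ^ 2))"
proof -
  have n1: "norm (complex_of_real r) < 1 / q" using r by simp
  have n2: "norm (complex_of_real r * \<omega>) < 1 / q" using r w by (simp add: norm_mult)
  have n3: "norm (complex_of_real r * \<omega> ^ 2) < 1 / q" using r w by (simp add: norm_mult norm_power)
  define L1 where "L1 = Re (eval_fps Lf (of_real r))"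
  define L2 where "L2 = Re (eval_fps Lf (of_real r * \<omega>))"
  define L3 where "L3 = Re (eval_fps Lf (of_real r * \<omega> ^ 2))"
  have s: "(\<lambda>n. 3 * (Lam n / real n * Re (complex_of_real r ^ n)) + 4 * (Lam n / real n * Re ((complex_of_real r * \<omega>) ^ n))
            + Lam n / real n * Re ((complex_of_real r * \<omega> ^ 2) ^ n)) sums (3 * L1 + 4 * L2 + L3)"
    unfolding L1_def L2_def L3_def
    by (intro sums_add sums_mult L_re_sums n1 n2 n3)
  have "0 \<le> 3 * L1 + 4 * L2 + L3"
  proof (rule sums_le[OF _ sums_zero s])
    fix n
    have e: "3 * (Lam n / real n * Re (complex_of_real r ^ n)) + 4 * (Lam n / real n * Re ((complex_of_real r * \<omega>) ^ n))
            + Lam n / real n * Re ((complex_of_real r * \<omega> ^ 2) ^ n) =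
            Lam n / real n * r ^ n * (3 + 4 * Re (\<omega> ^ n) + Re ((\<omega> ^ n) ^ 2))"
      by (simp add: power_mult_distrib algebra_simps flip: power_mult of_real_power)
    have "0 \<le> Lam n / real n * r ^ n" using Lam_nonneg r by simp
    moreover have "0 \<le> 3 + 4 * Re (\<omega> ^ n) + Re ((\<omega> ^ n) ^ 2)" by (rule three_four_one_term) (simp add: w norm_power)
    ultimately show "0 \<le> 3 * (Lam n / real n * Re (complex_of_real r ^ n)) + 4 * (Lam n / real n * Re ((complex_of_real r * \<omega>) ^ n))
            + Lam n / real n * Re ((complex_of_real r * \<omega> ^ 2) ^ n)" unfolding e by (rule mult_nonneg_nonneg)
  qed
  hence "1 \<le> exp (3 * L1 + 4 * L2 + L3)" by simp
  also have "exp (3 * L1 + 4 * L2 + L3) = exp L1 ^ 3 * exp L2 ^ 4 * exp L3"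
    by (simp add: exp_add exp_of_nat_mult[symmetric])
  also have "\<dots> = norm (eval_fps Zf (of_real r)) ^ 3 * norm (eval_fps Zf (of_real r * \<omega>)) ^ 4 *
              norm (eval_fps Zf (of_real r * \<omega> ^ 2))"
    unfolding L1_def L2_def L3_def Z_exp[OF n1] Z_exp[OF n2] Z_exp[OF n3] by simp
  finally show ?thesis .
qed

end

lemma alg341: fixes a b d t n1 n2 :: real
  assumes "t > 0" "n1 > 0" "n2 > 0"
  shows "(a / t) ^ 3 * (b * t / n1) ^ 4 * (d / n2) = a ^ 3 * b ^ 4 * d / (n1 ^ 4 * n2) * t"
  using assms by (simp add: field_simps power_mult_distrib eval_nat_numeral)

context asgq begin

lemma atl_ev: "eventually (\<lambda>r. r \<in> {0<..<1/q}) (at_left (1/q))"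
  by (rule eventually_at_left_real) (use qpos in simp)

lemma atl_contra: "eventually (\<lambda>r. False) (at_left (1/q)) \<Longrightarrow> False"
  by (simp add: eventually_False)

lemma Zs_eq: "Z_series deg z = eval_fps Zf z"
  by (simp add: Z_series_def eval_fps_def Zf_def Gc_def)

lemma W_ne_bdry:
  fixes z :: complex
  assumes nz: "norm z = 1 / q" and ne1: "z \<noteq> of_real (1/q)" and ne2: "z \<noteq> - of_real (1/q)"
  shows "W z \<noteq> 0"
proof
  assume Wz: "W z = 0"
  define \<omega> where "\<omega> = of_real q * z"
  have qn0: "(of_real q :: complex) \<noteq> 0" using qpos by simp
  have nw: "norm \<omega> = 1" using nz qpos by (simp add: \<omega>_def norm_mult)
  have z_eq: "z = of_real (1/q) * \<omega>" using qn0 by (simp add: \<omega>_def field_simps)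
  have w0: "\<omega> \<noteq> 0" using nw by auto
  have w1: "1 - \<omega> \<noteq> 0" using ne1 z_eq by auto
  have w2: "1 - \<omega> ^ 2 \<noteq> 0"
  proof
    assume "1 - \<omega> ^ 2 = 0"
    hence "(1 - \<omega>) * (1 + \<omega>) = 0" by (simp add: algebra_simps power2_eq_square)
    hence "\<omega> = -1" using w1 by (simp add: add_eq_0_iff)
    thus False using ne2 z_eq by simp
  qed
  have Rz: "norm z < R0" using nz R0(1) by simp
  obtain D where D: "(W has_field_derivative D) (at z)" using W_deriv[OF Rz] by blast
  define f where "f = (\<lambda>r::real. of_real r * \<omega>)"
  have f_lim: "(f \<longlongrightarrow> z) (at_left (1/q))"
    unfolding f_def z_eq by (intro tendsto_intros)
  have f_ne: "eventually (\<lambda>r. f r \<noteq> z) (at_left (1/q))"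
    using atl_ev
  proof eventually_elim
    case (elim r)
    show ?case
    proof
      assume "f r = z"
      hence "of_real r * \<omega> = of_real (1/q) * \<omega>" by (simp only: f_def z_eq)
      hence "(of_real r :: complex) = of_real (1/q)" using mult_right_cancel[OF w0] by blast
      hence "r = 1/q" by (simp only: of_real_eq_iff)
      thus False using elim by simp
    qed
  qed
  have f_at: "filterlim f (at z) (at_left (1/q))" by (rule filterlim_atI[OF f_lim f_ne])
  have dq: "((\<lambda>y. (W y - W z) / (y - z)) \<longlongrightarrow> D) (at z)" using D has_field_derivative_iff by blast
  have Qlim0: "((\<lambda>r. (W (f r) - W z) / (f r - z)) \<longlongrightarrow> D) (at_left (1/q))"
    by (rule filterlim_compose[OF dq f_at])
  define Q where "Q = (\<lambda>r. W (f r) / of_real (1 - q * r))"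
  have QQ: "eventually (\<lambda>r. - (\<omega> / of_real q) * ((W (f r) - W z) / (f r - z)) = Q r) (at_left (1/q))"
    using atl_ev
  proof eventually_elim
    case (elim r)
    hence r: "r < 1 / q" by simp
    have rq: "q * r \<noteq> 1" using r qpos by (simp add: field_simps)
    have fz: "f r - z = of_real (r - 1/q) * \<omega>" by (simp add: f_def z_eq algebra_simps)
    have rq': "(of_real r :: complex) * of_real q \<noteq> 1"
      using rq by (metis mult.commute of_real_eq_1_iff of_real_mult)
    show ?case unfolding Q_def fz Wz using w0 qn0 rq rq'
      by (simp add: field_simps of_real_diff)
  qed
  have Q_lim: "(Q \<longlongrightarrow> - (\<omega> / of_real q) * D) (at_left (1/q))"
    by (rule Lim_transform_eventually[OF tendsto_mult[OF tendsto_const Qlim0] QQ])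
  have c1: "isCont W (of_real (1/q))" using W_isCont R0(1) qpos by (simp add: norm_divide)
  have c3: "isCont W (of_real (1/q) * \<omega>^2)" using W_isCont R0(1) qpos nw by (simp add: norm_mult norm_power norm_divide)
  have l1: "((\<lambda>r. W (of_real r)) \<longlongrightarrow> W (of_real (1/q))) (at_left (1/q))"
    by (rule isCont_tendsto_compose[OF c1]) (intro tendsto_intros)
  have l3: "((\<lambda>r. W (of_real r * \<omega>^2)) \<longlongrightarrow> W (of_real (1/q) * \<omega>^2)) (at_left (1/q))"
    by (rule isCont_tendsto_compose[OF c3]) (intro tendsto_intros)
  define N1 where "N1 = (\<lambda>r::real. norm (1 - of_real q * (of_real r * \<omega>)))"
  define N2 where "N2 = (\<lambda>r::real. norm (1 - of_real q * (of_real r * \<omega>^2)))"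
  have l4: "(N1 \<longlongrightarrow> N1 (1/q)) (at_left (1/q))" unfolding N1_def by (intro tendsto_intros)
  have l5: "(N2 \<longlongrightarrow> N2 (1/q)) (at_left (1/q))" unfolding N2_def by (intro tendsto_intros)
  have N1q: "N1 (1/q) \<noteq> 0" using w1 qn0 by (simp add: N1_def)
  have N2q: "N2 (1/q) \<noteq> 0" using w2 qn0 by (simp add: N2_def)
  define \<Psi> where "\<Psi> = (\<lambda>r. norm (W (of_real r)) ^ 3 * norm (Q r) ^ 4 * norm (W (of_real r * \<omega>^2)) / (N1 r ^ 4 * N2 r))"
  have Psi_lim: "(\<Psi> \<longlongrightarrow> norm (W (of_real (1/q))) ^ 3 * norm (- (\<omega> / of_real q) * D) ^ 4 * norm (W (of_real (1/q) * \<omega>^2)) / (N1 (1/q) ^ 4 * N2 (1/q))) (at_left (1/q))"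
    unfolding \<Psi>_def using N1q N2q by (intro tendsto_intros l1 l3 l4 l5 Q_lim) auto
  have Phi_lim: "((\<lambda>r. \<Psi> r * (1 - q * r)) \<longlongrightarrow> 0) (at_left (1/q))"
  proof -
    have "((\<lambda>r. 1 - q * r) \<longlongrightarrow> 1 - q * (1/q)) (at_left (1/q))" by (intro tendsto_intros)
    hence "((\<lambda>r. 1 - q * r) \<longlongrightarrow> 0) (at_left (1/q))" using qpos by simp
    from tendsto_mult[OF Psi_lim this] show ?thesis by simp
  qed
  have ev1: "eventually (\<lambda>r. \<Psi> r * (1 - q * r) < 1) (at_left (1/q))"
    using order_tendstoD(2)[OF Phi_lim, of 1] by simp
  have ev2: "eventually (\<lambda>r. 1 \<le> \<Psi> r * (1 - q * r)) (at_left (1/q))"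
    using atl_ev
  proof eventually_elim
    case (elim r)
    hence r: "0 < r" "r < 1 / q" by auto
    have t: "1 - q * r > 0" using r qpos by (simp add: field_simps)
    have n1: "norm (complex_of_real r) < 1 / q" using r by simp
    have n2: "norm (complex_of_real r * \<omega>) < 1 / q" using r nw by (simp add: norm_mult)
    have n3: "norm (complex_of_real r * \<omega> ^ 2) < 1 / q" using r nw by (simp add: norm_mult norm_power)
    have N1p: "N1 r > 0" using one_minus_ne[OF n2] by (simp add: N1_def)
    have N2p: "N2 r > 0" using one_minus_ne[OF n3] by (simp add: N2_def)
    have nt: "cmod (1 - complex_of_real (q * r)) = 1 - q * r"
    proof -
      have "1 - complex_of_real (q * r) = complex_of_real (1 - q * r)" by simp
      thus ?thesis using t by (simp only: norm_of_real)
    qed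
    have nt2: "cmod (1 - complex_of_real q * complex_of_real r) = 1 - q * r"
      using nt by (simp only: of_real_mult)
    have e1: "norm (eval_fps Zf (of_real r)) = norm (W (of_real r)) / (1 - q * r)"
      using Z_W[OF n1] t by (simp add: norm_divide nt nt2)
    have e2: "norm (eval_fps Zf (of_real r * \<omega>)) = norm (Q r) * (1 - q * r) / N1 r"
      using Z_W[OF n2] t by (simp add: norm_divide Q_def f_def N1_def nt nt2)
    have e3: "norm (eval_fps Zf (of_real r * \<omega>^2)) = norm (W (of_real r * \<omega>^2)) / N2 r"
      using Z_W[OF n3] by (simp add: norm_divide N2_def)
    have "1 \<le> norm (eval_fps Zf (of_real r)) ^ 3 * norm (eval_fps Zf (of_real r * \<omega>)) ^ 4 *
              norm (eval_fps Zf (of_real r * \<omega> ^ 2))" by (rule ineq341[OF r nw])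
    also have "\<dots> = \<Psi> r * (1 - q * r)"
      unfolding e1 e2 e3 \<Psi>_def using t N1p N2p by (rule alg341)
    finally show ?case .
  qed
  have "eventually (\<lambda>r. False) (at_left (1/q))" using ev1 ev2 by eventually_elim auto
  thus False by (rule atl_contra)
qed

lemma W_ne_neg:
  assumes H: "Z_cont_nonzero_at deg q (- 1 / complex_of_real q)"
  shows "W (- of_real (1/q)) \<noteq> 0"
proof -
  define w where "w = - (of_real (1/q) :: complex)"
  have w_eq: "- 1 / complex_of_real q = w" by (simp add: w_def)
  obtain S F where S: "open S" "ball 0 (1 / q) \<subseteq> S" "w \<in> S" "F holomorphic_on S"
    and FZ: "\<forall>z\<in>ball 0 (1 / q). F z = Z_series deg z" and Fw: "F w \<noteq> 0"
    using H unfolding Z_cont_nonzero_at_def w_eq by blast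
  have cF: "isCont F w" using S by (meson continuous_on_eq_continuous_at holomorphic_on_imp_continuous_on)
  have g_lim: "((\<lambda>r::real. - of_real r :: complex) \<longlongrightarrow> w) (at_left (1/q))"
    unfolding w_def by (intro tendsto_intros)
  have lim1: "((\<lambda>r. F (- of_real r)) \<longlongrightarrow> F w) (at_left (1/q))" by (rule isCont_tendsto_compose[OF cF g_lim])
  have nw: "norm w < R0" using R0(1) qpos by (simp add: w_def norm_divide)
  have den: "1 - of_real q * w \<noteq> 0" using qpos by (simp add: w_def)
  have lim2: "((\<lambda>r. W (- of_real r) / (1 - of_real q * (- of_real r))) \<longlongrightarrow> W w / (1 - of_real q * w)) (at_left (1/q))"
    by (intro tendsto_intros isCont_tendsto_compose[OF W_isCont[OF nw] g_lim] g_lim den)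
  have ev: "eventually (\<lambda>r. W (- of_real r) / (1 - of_real q * (- of_real r)) = F (- of_real r)) (at_left (1/q))"
    using atl_ev
  proof eventually_elim
    case (elim r)
    hence n: "norm (- complex_of_real r) < 1 / q" by auto
    show ?case using FZ n Z_W[OF n] by (simp add: Zs_eq)
  qed
  have lim3: "((\<lambda>r. F (- of_real r)) \<longlongrightarrow> W w / (1 - of_real q * w)) (at_left (1/q))"
    by (rule Lim_transform_eventually[OF lim2 ev])
  have "F w = W w / (1 - of_real q * w)" by (rule tendsto_unique[OF _ lim1 lim3]) simp
  hence "W w \<noteq> 0" using Fw by auto
  thus ?thesis by (simp add: w_def)
qed

lemma W_ne_closed:
  assumes H: "Z_cont_nonzero_at deg q (- 1 / complex_of_real q)" and z: "norm z \<le> 1 / q"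
  shows "W z \<noteq> 0"
proof (cases "norm z < 1 / q")
  case True thus ?thesis by (rule W_ne_inner)
next
  case False
  hence nz: "norm z = 1 / q" using z by simp
  show ?thesis
  proof (cases "z = of_real (1/q)")
    case True thus ?thesis using W_at_1q cpos by simp
  next
    case F1: False
    show ?thesis
    proof (cases "z = - of_real (1/q)")
      case True thus ?thesis using W_ne_neg[OF H] by simp
    next
      case False thus ?thesis using W_ne_bdry[OF nz F1 False] by simp
    qed
  qed
qed

end

context asgq begin

lemma rho_exists:
  assumes H: "Z_cont_nonzero_at deg q (- 1 / complex_of_real q)"
  shows "\<exists>\<rho>. 1 / q < \<rho> \<and> \<rho> < R0 \<and> (\<forall>z. norm z < \<rho> \<longrightarrow> W z \<noteq> 0)"
proof -
  define R1 where "R1 = (1 / q + R0) / 2"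
  have R1: "1 / q < R1" "R1 < R0" using R0(1) by (auto simp: R1_def)
  define Zs where "Zs = {z \<in> cball 0 R1. W z = 0}"
  have contW: "continuous_on (cball 0 R1) W"
  proof -
    have "cball 0 R1 \<subseteq> ball (0::complex) R0" using R1 by (auto simp: dist_norm)
    thus ?thesis using continuous_on_subset[OF holomorphic_on_imp_continuous_on[OF W_holo]] by blast
  qed
  have "closed Zs" unfolding Zs_def by (rule continuous_closed_preimage_constant[OF contW closed_cball])
  hence c0: "compact (cball 0 R1 \<inter> Zs)" by (rule compact_Int_closed[OF compact_cball])
  have "cball 0 R1 \<inter> Zs = Zs" by (auto simp: Zs_def)
  hence cZ: "compact Zs" using c0 by simp
  show ?thesis
  proof (cases "Zs = {}")
    case True
    show ?thesis
    proof (intro exI conjI allI impI)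
      fix z :: complex assume "norm z < R1"
      thus "W z \<noteq> 0" using True by (auto simp: Zs_def)
    qed (use R1 in auto)
  next
    case False
    obtain z1 where z1: "z1 \<in> Zs" "\<forall>y\<in>Zs. norm z1 \<le> norm y"
      using continuous_attains_inf[OF cZ False, of norm] continuous_on_norm_id by blast
    have "W z1 = 0" "norm z1 \<le> R1" using z1 by (auto simp: Zs_def)
    hence gt: "norm z1 > 1 / q" using W_ne_closed[OF H] by (meson not_le)
    show ?thesis
    proof (intro exI conjI allI impI)
      fix z :: complex assume z: "norm z < norm z1"
      show "W z \<noteq> 0"
      proof
        assume "W z = 0"
        hence "z \<in> Zs" using z \<open>norm z1 \<le> R1\<close> by (auto simp: Zs_def)
        thus False using z1 z by force
      qed
    qed (use gt \<open>norm z1 \<le> R1\<close> R1 in auto)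
  qed
qed

lemma Mu_analytic:
  assumes H: "Z_cont_nonzero_at deg q (- 1 / complex_of_real q)"
  shows "\<exists>t B. 1 / q \<le> t \<and> t < 1 \<and> (\<forall>n. \<bar>Mu n\<bar> \<le> B * (q * t) ^ n) \<and> (\<lambda>n. Mu n / q ^ n) sums 0"
proof -
  obtain \<rho> where rho: "1 / q < \<rho>" "\<rho> < R0" and Wn: "\<And>z. norm z < \<rho> \<Longrightarrow> W z \<noteq> 0"
    using rho_exists[OF H] by blast
  define A where "A = (\<lambda>z. (1 - of_real q * z) / W z)"
  have holoW: "W holomorphic_on eball 0 (ereal \<rho>)"
    using W_holo rho by (auto intro: holomorphic_on_subset)
  have holoA: "A holomorphic_on eball 0 (ereal \<rho>)"
    unfolding A_def using Wn by (intro holomorphic_intros holoW) auto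
  have exp: "A has_fps_expansion Mf"
    unfolding has_fps_expansion_def
  proof
    show "0 < fps_conv_radius Mf" using Mf_rad qpos by (metis ereal_less(2) order_less_le_trans zero_less_divide_1_iff)
    have "eventually (\<lambda>z. z \<in> ball (0::complex) (1 / q)) (nhds 0)"
      using qpos by (intro eventually_nhds_in_open) auto
    thus "eventually (\<lambda>z. eval_fps Mf z = A z) (nhds 0)"
    proof eventually_elim
      case (elim z)
      hence n: "norm z < 1 / q" by simp
      have "eval_fps Mf z = 1 / eval_fps Zf z" using ZM_eval[OF n] Z_ne0[OF n] by (simp add: field_simps)
      also have "\<dots> = A z" using Z_W[OF n] one_minus_ne[OF n] by (simp add: A_def)
      finally show ?case .
    qed
  qed
  have sm: "(\<lambda>n. fps_nth Mf n * z ^ n) sums A z" if "norm z < \<rho>" for z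
    by (rule has_fps_expansion_imp_sums_complex[OF exp holoA]) (use that in simp)
  define \<rho>' where "\<rho>' = (1 / q + \<rho>) / 2"
  have rho': "1 / q < \<rho>'" "\<rho>' < \<rho>" using rho by (auto simp: \<rho>'_def)
  have rp: "\<rho>' > 0" using rho' qpos by (smt (verit) divide_pos_pos)
  have "(\<lambda>n. fps_nth Mf n * of_real \<rho>' ^ n) sums A (of_real \<rho>')" by (rule sm) (use rho' rp in simp)
  hence "summable (\<lambda>n. complex_of_real (Mu n * \<rho>' ^ n))" by (simp add: sums_iff Mf_def)
  hence "summable (\<lambda>n. Mu n * \<rho>' ^ n)" by (simp only: summable_complex_of_real)
  hence "(\<lambda>n. Mu n * \<rho>' ^ n) \<longlonglongrightarrow> 0" by (rule summable_LIMSEQ_zero)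
  hence "Bseq (\<lambda>n. Mu n * \<rho>' ^ n)" by (rule convergent_imp_Bseq[OF convergentI])
  then obtain B where B: "B > 0" "\<And>n. norm (Mu n * \<rho>' ^ n) \<le> B" by (auto simp: Bseq_def)
  define t where "t = 1 / (q * \<rho>')"
  have qt: "q * t = 1 / \<rho>'" using qpos by (simp add: t_def)
  have bnd: "\<bar>Mu n\<bar> \<le> B * (q * t) ^ n" for n
  proof -
    have "\<bar>Mu n\<bar> * \<rho>' ^ n \<le> B" using B(2)[of n] rp by (simp add: abs_mult)
    thus ?thesis unfolding qt using rp by (simp add: field_simps power_divide)
  qed
  have t1: "t < 1" using rho' qpos by (simp add: t_def field_simps)
  have t2: "1 / q \<le> t" using rho' rho R0(2) qpos rp by (simp add: t_def field_simps)
  have "(\<lambda>n. fps_nth Mf n * of_real (1/q) ^ n) sums A (of_real (1/q))" by (rule sm) (use rho qpos in \<open>simp add: norm_divide\<close>)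
  moreover have "A (of_real (1/q)) = 0" using qpos by (simp add: A_def)
  ultimately have "(\<lambda>n. complex_of_real (Mu n / q ^ n)) sums complex_of_real 0" by (simp add: Mf_def field_simps)
  hence "(\<lambda>n. Mu n / q ^ n) sums 0" by (simp only: sums_of_real_iff)
  thus ?thesis using bnd t1 t2 by blast
qed

end

context asg begin

lemma T_sub: "(\<lambda>P. {#P#}) ` {P. deg P \<le> m} \<subseteq> {g. degG deg g \<le> m}" by auto

lemma T_fin: "finite {P. deg P \<le> m}"
proof -
  have "inj_on (\<lambda>P. {#P#}) {P. deg P \<le> m}" by (auto simp: inj_on_def)
  thus ?thesis using finite_subset[OF T_sub fin_le'] finite_image_iff by blast
qed

lemma card_T: "real (card {P. deg P \<le> m}) \<le> (\<Sum>d\<le>m. Gc d)"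
proof -
  have "card {P. deg P \<le> m} \<le> card {g. degG deg g \<le> m}"
    by (rule card_inj_on_le[OF _ T_sub fin_le']) (auto simp: inj_on_def)
  also have "card {g. degG deg g \<le> m} = (\<Sum>g\<in>{g. degG deg g \<le> m}. 1)" by simp
  also have "\<dots> = (\<Sum>d\<le>m. \<Sum>g\<in>{g\<in>{g. degG deg g \<le> m}. degG deg g = d}. 1)"
    by (rule sum.group[symmetric]) (auto simp: fin_le')
  also have "\<dots> = (\<Sum>d\<le>m. G_count deg d)"
    by (rule sum.cong[OF refl]) (auto simp: G_count_def intro!: arg_cong[where f = card])
  finally show ?thesis by (simp add: Gc_def flip: of_nat_sum)
qed

lemma dminus_iff: "d_minus deg g > enat m \<longleftrightarrow> set_mset g \<inter> {P. deg P \<le> m} = {}"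
proof (cases "g = {#}")
  case False
  hence "set_mset g \<noteq> {}" by simp
  hence "m < Min (deg ` set_mset g) \<longleftrightarrow> (\<forall>P\<in>set_mset g. m < deg P)" by simp
  thus ?thesis using False by (auto simp: d_minus_def)
qed (simp add: d_minus_def)

lemma smooth_card: "(\<Sum>j\<le>n. bS S j) \<le> real (Suc n) ^ card S" if "finite S"
proof -
  define X where "X = {g. degG deg g \<le> n \<and> set_mset g \<subseteq> S}"
  have finX: "finite X" unfolding X_def by (rule finite_subset[OF _ fin_le'[of n]]) auto
  have "(\<Sum>j\<le>n. bS S j) = real (\<Sum>j\<le>n. card {g. degG deg g = j \<and> set_mset g \<subseteq> S})" by (simp add: bS_def)
  also have "(\<Sum>j\<le>n. card {g. degG deg g = j \<and> set_mset g \<subseteq> S}) = (\<Sum>j\<le>n. \<Sum>g\<in>{g\<in>X. degG deg g = j}. 1)"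
    by (rule sum.cong[OF refl]) (auto simp: X_def intro!: arg_cong[where f = card])
  also have "\<dots> = (\<Sum>g\<in>X. 1)" by (rule sum.group[OF finX]) (auto simp: X_def)
  also have "\<dots> = card X" by simp
  also have "card X \<le> card (PiE S (\<lambda>_. {..n}))"
  proof (rule card_inj_on_le)
    show "inj_on (\<lambda>g. restrict (count g) S) X"
    proof (rule inj_onI)
      fix g h assume g: "g \<in> X" and h: "h \<in> X" and e: "restrict (count g) S = restrict (count h) S"
      show "g = h"
      proof (rule multiset_eqI)
        fix p show "count g p = count h p"
        proof (cases "p \<in> S")
          case True thus ?thesis using fun_cong[OF e, of p] by simp
        next
          case False
          hence "p \<notin># g" "p \<notin># h" using g h by (auto simp: X_def)
          thus ?thesis by (simp add: not_in_iff)
        qed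
      qed
    qed
    show "(\<lambda>g. restrict (count g) S) ` X \<subseteq> PiE S (\<lambda>_. {..n})"
    proof
      fix x assume "x \<in> (\<lambda>g. restrict (count g) S) ` X"
      then obtain g where g: "g \<in> X" "x = restrict (count g) S" by blast
      have "count g p \<le> n" for p
        using g(1) count_le_size[of g p] size_le_degG[OF AS, of g] by (auto simp: X_def)
      thus "x \<in> PiE S (\<lambda>_. {..n})" using g by auto
    qed
    show "finite (PiE S (\<lambda>_. {..n}))" using that by (simp add: finite_PiE)
  qed
  also have "card (PiE S (\<lambda>_. {..n})) = Suc n ^ card S" using that by (simp add: card_PiE)
  finally show ?thesis by (simp only: of_nat_power)
qed

lemma R_sum_eq:
  fixes q :: real
  shows "R_sum deg q n m = (\<Sum>k\<le>n. (\<Sum>i\<le>k. Mu i * bS {P. deg P \<le> m} (k - i)) / q ^ k)"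
proof -
  define T where "T = {P. deg P \<le> m}"
  define A where "A = {g. degG deg g \<le> n \<and> set_mset g \<inter> T = {}}"
  have finA: "finite A" unfolding A_def by (rule finite_subset[OF _ fin_le'[of n]]) auto
  have "R_sum deg q n m = (\<Sum>g\<in>A. real_of_int (mobiusG g) / q ^ degG deg g)"
    unfolding R_sum_def A_def T_def normG_def using dminus_iff by simp
  also have "\<dots> = (\<Sum>k\<le>n. \<Sum>g\<in>{g\<in>A. degG deg g = k}. real_of_int (mobiusG g) / q ^ degG deg g)"
    by (rule sum.group[OF finA, symmetric]) (auto simp: A_def)
  also have "\<dots> = (\<Sum>k\<le>n. (\<Sum>g\<in>{g. degG deg g = k \<and> set_mset g \<inter> T = {}}. real_of_int (mobiusG g)) / q ^ k)"
  proof (rule sum.cong[OF refl])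
    fix k assume k: "k \<in> {..n}"
    have e: "{g\<in>A. degG deg g = k} = {g. degG deg g = k \<and> set_mset g \<inter> T = {}}" using k by (auto simp: A_def)
    show "(\<Sum>g\<in>{g\<in>A. degG deg g = k}. real_of_int (mobiusG g) / q ^ degG deg g) =
          (\<Sum>g\<in>{g. degG deg g = k \<and> set_mset g \<inter> T = {}}. real_of_int (mobiusG g)) / q ^ k"
      unfolding e by (simp add: sum_divide_distrib)
  qed
  also have "\<dots> = (\<Sum>k\<le>n. (\<Sum>i\<le>k. Mu i * bS T (k - i)) / q ^ k)" by (simp add: I3)
  finally show ?thesis by (simp add: T_def)
qed

lemma triangle_swap:
  fixes h :: "nat \<Rightarrow> nat \<Rightarrow> real"
  shows "(\<Sum>k\<le>n. \<Sum>i\<le>k. h i (k - i)) = (\<Sum>j\<le>n. \<Sum>i\<le>n - j. h i j)"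
proof -
  have "(\<Sum>k\<le>n. \<Sum>i\<le>k. h i (k - i)) = (\<Sum>(k,i)\<in>(SIGMA k:{..n}. {..k}). h i (k - i))"
    by (rule sum.Sigma) auto
  also have "\<dots> = (\<Sum>(j,i)\<in>(SIGMA j:{..n}. {..n - j}). h i j)"
    by (rule sum.reindex_bij_witness[where j = "\<lambda>(k,i). (k - i, i)" and i = "\<lambda>(j,i). (i + j, i)"]) auto
  also have "\<dots> = (\<Sum>j\<le>n. \<Sum>i\<le>n - j. h i j)"
    by (rule sum.Sigma[symmetric]) auto
  finally show ?thesis .
qed

end

context asgq begin

lemma R_bound:
  assumes t: "1 / q \<le> t" "t < 1" and Bb: "\<And>n. \<bar>Mu n\<bar> \<le> B * (q * t) ^ n"
    and S0: "(\<lambda>n. Mu n / q ^ n) sums 0"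
  shows "\<bar>R_sum deg q n m\<bar> \<le> B * t / (1 - t) * t ^ n * real (Suc n) ^ card {P. deg P \<le> m}"
proof -
  have tpos: "t > 0" using t(1) qpos by (smt (verit) divide_pos_pos)
  have B0: "B \<ge> 0" using Bb[of 0] by simp
  define f where "f = (\<lambda>i. Mu i / q ^ i)"
  have fb: "\<bar>f i\<bar> \<le> B * t ^ i" for i
  proof -
    have "\<bar>f i\<bar> = \<bar>Mu i\<bar> / q ^ i" using qpos by (simp add: f_def abs_divide)
    also have "\<dots> \<le> B * (q * t) ^ i / q ^ i" using Bb[of i] qpos by (intro divide_right_mono) auto
    also have "\<dots> = B * t ^ i" using qpos by (simp add: power_mult_distrib)
    finally show ?thesis .
  qed
  define Bt where "Bt = B * t / (1 - t)"
  have Bt0: "Bt \<ge> 0" using B0 tpos t(2) by (simp add: Bt_def)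
  have tail: "\<bar>\<Sum>i\<le>N. f i\<bar> \<le> Bt * t ^ N" for N
  proof -
    have s: "(\<lambda>i. f (i + Suc N)) sums (0 - (\<Sum>i<Suc N. f i))"
      using sums_split_initial_segment[OF S0[folded f_def], of "Suc N"] .
    have g: "(\<lambda>i. B * t ^ Suc N * t ^ i) sums (B * t ^ Suc N * (1 / (1 - t)))"
      by (rule sums_mult[OF geometric_sums]) (use tpos t(2) in simp)
    have g': "(\<lambda>i. - (B * t ^ Suc N * t ^ i)) sums (- (B * t ^ Suc N * (1 / (1 - t))))"
      by (rule sums_minus[OF g])
    have le1: "f (i + Suc N) \<le> B * t ^ Suc N * t ^ i" for i
      using fb[of "i + Suc N"] by (simp add: power_add mult_ac)
    have le2: "- (B * t ^ Suc N * t ^ i) \<le> f (i + Suc N)" for i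
      using fb[of "i + Suc N"] by (simp add: power_add mult_ac)
    have "0 - (\<Sum>i<Suc N. f i) \<le> B * t ^ Suc N * (1 / (1 - t))" by (rule sums_le[OF le1 s g])
    moreover have "- (B * t ^ Suc N * (1 / (1 - t))) \<le> 0 - (\<Sum>i<Suc N. f i)" by (rule sums_le[OF le2 g' s])
    ultimately have "\<bar>\<Sum>i<Suc N. f i\<bar> \<le> B * t ^ Suc N * (1 / (1 - t))" by linarith
    thus ?thesis by (simp add: lessThan_Suc_atMost Bt_def mult_ac)
  qed
  define T where "T = {P. deg P \<le> m}"
  define b where "b = bS T"
  have b0: "b j \<ge> 0" for j by (simp add: b_def bS_def)
  have "R_sum deg q n m = (\<Sum>k\<le>n. \<Sum>i\<le>k. f i * (b (k - i) / q ^ (k - i)))"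
    unfolding R_sum_eq[of q n m] T_def[symmetric] b_def[symmetric]
  proof (rule sum.cong[OF refl])
    fix k assume k: "k \<in> {..n}"
    show "(\<Sum>i\<le>k. Mu i * b (k - i)) / q ^ k = (\<Sum>i\<le>k. f i * (b (k - i) / q ^ (k - i)))"
      unfolding sum_divide_distrib
    proof (rule sum.cong[OF refl])
      fix i assume "i \<in> {..k}"
      hence "q ^ k = q ^ i * q ^ (k - i)" by (simp add: power_add[symmetric])
      thus "Mu i * b (k - i) / q ^ k = f i * (b (k - i) / q ^ (k - i))" using qpos by (simp add: f_def)
    qed
  qed
  also have "\<dots> = (\<Sum>j\<le>n. \<Sum>i\<le>n - j. f i * (b j / q ^ j))" by (rule triangle_swap)
  also have "\<dots> = (\<Sum>j\<le>n. b j / q ^ j * (\<Sum>i\<le>n - j. f i))" by (simp add: sum_distrib_left sum_divide_distrib mult_ac)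
  finally have Req: "R_sum deg q n m = (\<Sum>j\<le>n. b j / q ^ j * (\<Sum>i\<le>n - j. f i))" .
  have "\<bar>R_sum deg q n m\<bar> \<le> (\<Sum>j\<le>n. \<bar>b j / q ^ j * (\<Sum>i\<le>n - j. f i)\<bar>)" unfolding Req by (rule sum_abs)
  also have "\<dots> \<le> (\<Sum>j\<le>n. Bt * t ^ n * b j)"
  proof (rule sum_mono)
    fix j assume j: "j \<in> {..n}"
    have qj: "(1 / q) ^ j \<le> t ^ j" using t(1) qpos by (intro power_mono) auto
    have "\<bar>b j / q ^ j * (\<Sum>i\<le>n - j. f i)\<bar> = b j / q ^ j * \<bar>\<Sum>i\<le>n - j. f i\<bar>"
      using b0[of j] qpos by (simp add: abs_mult)
    also have "\<dots> \<le> b j / q ^ j * (Bt * t ^ (n - j))"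
      using b0[of j] qpos by (intro mult_left_mono tail) auto
    also have "\<dots> = Bt * b j * ((1 / q) ^ j * t ^ (n - j))" by (simp add: power_one_over)
    also have "\<dots> \<le> Bt * b j * (t ^ j * t ^ (n - j))"
      using Bt0 b0[of j] tpos qj by (intro mult_left_mono mult_right_mono) auto
    also have "t ^ j * t ^ (n - j) = t ^ n" using j by (simp add: power_add[symmetric])
    finally show "\<bar>b j / q ^ j * (\<Sum>i\<le>n - j. f i)\<bar> \<le> Bt * t ^ n * b j" by (simp add: mult_ac)
  qed
  also have "\<dots> = Bt * t ^ n * (\<Sum>j\<le>n. b j)" by (simp add: sum_distrib_left)
  also have "\<dots> \<le> Bt * t ^ n * real (Suc n) ^ card T"
    unfolding b_def using Bt0 tpos smooth_card[OF T_fin] by (intro mult_left_mono) (auto simp: T_def)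
  finally show ?thesis by (simp add: Bt_def T_def)
qed

end

lemma asy_main:
  fixes a K e :: real assumes "e > 0" "a > 0" "K > 0"
  shows "eventually (\<lambda>x::real. K * (ln (ln x) + 1) * ln x powr a * ln (x+1) \<le> e * a * x) at_top"
  using assms by real_asymp

theorem lemma2p8:
  fixes deg :: "'p \<Rightarrow> nat" and c q :: real
  assumes "arith_semigroup deg"
    and "c > 0" and "q > 1"
    and "axiom_A_sharp deg c q"
    and "Z_cont_nonzero_at deg q (- 1 / complex_of_real q)"
  shows "\<exists>\<eta>. 0 \<le> \<eta> \<and> \<eta> < 1 \<and>
           (\<forall>\<epsilon>>0. \<exists>C N. \<forall>n\<ge>N. \<forall>m::nat. real m \<le> ln (ln (real n)) \<longrightarrow>
              \<bar>R_sum deg q n m\<bar> \<le> C * q powr ((\<eta> - 1 + \<epsilon>) * real n))"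
proof -
  obtain e0 C0 where e0: "0 \<le> e0" "e0 < 1"
    and AA: "\<And>n. \<bar>real (G_count deg n) - c * q ^ n\<bar> \<le> C0 * q powr (e0 * real n)"
    using assms(4) unfolding axiom_A_sharp_def by blast
  interpret asgq deg c q e0 C0
    by unfold_locales (use assms e0 AA in auto)
  obtain t B where t: "1 / q \<le> t" "t < 1" and Bb: "\<And>n. \<bar>Mu n\<bar> \<le> B * (q * t) ^ n"
    and S0: "(\<lambda>n. Mu n / q ^ n) sums 0"
    using Mu_analytic[OF assms(5)] by blast
  have tpos: "t > 0" using t(1) qpos by (smt (verit) divide_pos_pos)
  have B0: "B \<ge> 0" using Bb[of 0] by simp
  define a where "a = ln q"
  have apos: "a > 0" using q1 by (simp add: a_def)
  define \<eta> where "\<eta> = 1 + ln t / ln q"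
  have lt: "ln t < 0" using tpos t(2) by simp
  have "ln (1 / q) \<le> ln t" using t(1) tpos qpos by (subst ln_le_cancel_iff) auto
  hence lt2: "- ln q \<le> ln t" using qpos by (simp add: ln_div)
  have eta: "0 \<le> \<eta>" "\<eta> < 1" using lt lt2 apos unfolding \<eta>_def a_def by (auto simp: field_simps)
  have Kpos: "K > 0" using cpos by (simp add: K_def)
  show ?thesis
  proof (rule exI[of _ \<eta>], intro conjI allI impI)
    show "0 \<le> \<eta>" "\<eta> < 1" by (fact eta)+
    fix \<epsilon> :: real assume ep: "\<epsilon> > 0"
    obtain X where X: "\<And>x. x \<ge> X \<Longrightarrow> K * (ln (ln x) + 1) * ln x powr a * ln (x+1) \<le> \<epsilon> * a * x"
      using asy_main[OF ep apos Kpos] unfolding eventually_at_top_linorder by blast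
    define C where "C = B * t / (1 - t)"
    have C0: "C \<ge> 0" using B0 tpos t(2) by (simp add: C_def)
    define N where "N = max 3 (nat \<lceil>X\<rceil>)"
    show "\<exists>C N. \<forall>n\<ge>N. \<forall>m::nat. real m \<le> ln (ln (real n)) \<longrightarrow>
              \<bar>R_sum deg q n m\<bar> \<le> C * q powr ((\<eta> - 1 + \<epsilon>) * real n)"
    proof (intro exI[of _ C] exI[of _ N] allI impI)
      fix n m :: nat assume n: "n \<ge> N" and m: "real m \<le> ln (ln (real n))"
      have n3: "real n \<ge> 3" using n by (simp add: N_def)
      have nX: "real n \<ge> X" using n by (simp add: N_def)
      have ln1: "ln (real n) \<ge> 1"
      proof -
        have "exp 1 \<le> real n" using exp_le n3 by linarith
        hence "ln (exp 1) \<le> ln (real n)" using n3 by (subst ln_le_cancel_iff) auto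
        thus ?thesis by simp
      qed
      define T where "T = {P. deg P \<le> m}"
      have cardT: "real (card T) \<le> (real m + 1) * K * q ^ m"
      proof -
        have "real (card T) \<le> (\<Sum>d\<le>m. Gc d)" unfolding T_def by (rule card_T)
        also have "\<dots> \<le> (\<Sum>d\<le>m. K * q ^ m)"
        proof (rule sum_mono)
          fix d assume "d \<in> {..m}"
          hence "q ^ d \<le> q ^ m" using q1 by (intro power_increasing) auto
          thus "Gc d \<le> K * q ^ m" using Gc_bound[of d] Kpos by (meson mult_left_mono less_imp_le order_trans)
        qed
        also have "\<dots> = (real m + 1) * K * q ^ m" by simp
        finally show ?thesis .
      qed
      have qm: "q ^ m \<le> ln (real n) powr a"
      proof -
        have "q ^ m = exp (real m * a)" using qpos by (simp add: a_def exp_of_nat_mult exp_ln)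
        also have "\<dots> \<le> exp (ln (ln (real n)) * a)" using m apos by (simp add: mult_right_mono)
        also have "\<dots> = ln (real n) powr a" using ln1 by (simp add: powr_def mult.commute)
        finally show ?thesis .
      qed
      have l1: "ln (real n + 1) \<ge> 0" by simp
      have E: "(real m + 1) * K * q ^ m * ln (real n + 1) \<le> \<epsilon> * a * real n"
      proof -
        have "(real m + 1) * K * q ^ m * ln (real n + 1) \<le> K * (ln (ln (real n)) + 1) * ln (real n) powr a * ln (real n + 1)"
        proof -
          have "(real m + 1) * q ^ m \<le> (ln (ln (real n)) + 1) * ln (real n) powr a"
            using m qm qpos by (intro mult_mono) auto
          hence "K * ((real m + 1) * q ^ m) \<le> K * ((ln (ln (real n)) + 1) * ln (real n) powr a)"
            using Kpos by (intro mult_left_mono) auto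
          thus ?thesis using l1 by (intro mult_right_mono) (auto simp: mult_ac)
        qed
        also have "\<dots> \<le> \<epsilon> * a * real n" using X[OF nX] by simp
        finally show ?thesis .
      qed
      have pw: "real (Suc n) ^ card T \<le> q powr (\<epsilon> * real n)"
      proof -
        have "real (Suc n) ^ card T = real (Suc n) powr real (card T)" by (simp add: powr_realpow)
        also have "\<dots> \<le> real (Suc n) powr ((real m + 1) * K * q ^ m)" using cardT by (intro powr_mono) auto
        also have "\<dots> = exp ((real m + 1) * K * q ^ m * ln (real n + 1))" by (simp add: powr_def mult.commute add.commute)
        also have "\<dots> \<le> exp (\<epsilon> * a * real n)" using E by simp
        also have "\<dots> = q powr (\<epsilon> * real n)" using qpos by (simp add: powr_def a_def mult_ac)
        finally show ?thesis .
      qed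
      have tn: "t ^ n = q powr (ln t / ln q * real n)"
      proof -
        have "q powr (ln t / ln q * real n) = exp (real n * ln t)" using qpos apos by (simp add: powr_def a_def field_simps)
        also have "\<dots> = t ^ n" using tpos by (simp add: exp_of_nat_mult exp_ln)
        finally show ?thesis by simp
      qed
      have "\<bar>R_sum deg q n m\<bar> \<le> C * t ^ n * real (Suc n) ^ card T"
        using R_bound[OF t Bb S0, of n m] by (simp add: C_def T_def)
      also have "\<dots> \<le> C * t ^ n * q powr (\<epsilon> * real n)"
        using C0 tpos pw by (intro mult_left_mono) auto
      also have "\<dots> = C * q powr ((\<eta> - 1 + \<epsilon>) * real n)"
        unfolding tn \<eta>_def by (simp add: powr_add[symmetric] algebra_simps)
      finally show "\<bar>R_sum deg q n m\<bar> \<le> C * q powr ((\<eta> - 1 + \<epsilon>) * real n)" .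
    qed
  qed
qed

end
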